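(* Let $k$ be an algebraically closed field of characteristic zero, $A=k[x,y]$, $\mathfrak m=(x,y)$. Let $M$ be an $A$-module of length $n\geq 3$ supported at $\mathfrak m$ whose minimal number of generators $r_M=\dim_k M/\mathfrak m M$ equals $n-1$. Then $M\cong k^{n-3}\oplus N$, where $k=A/\mathfrak m$ and $N$ is an $A$-module of length $3$ (supported at $\mathfrak m$) with $r_N=2$. *)

theory Defs
  imports "HOL-Computational_Algebra.Polynomial" "Jordan_Normal_Form.DL_Rank"
begin

definition alg_closed :: "'a::field itself \<Rightarrow> bool" where
  "alg_closed T \<longleftrightarrow> (\<forall>p::'a poly. degree p > 0 \<longrightarrow> (\<exists>z. poly p z = 0))"

definition nilpotent_mat :: "'a::semiring_1 mat \<Rightarrow> bool" where
  "nilpotent_mat X \<longleftrightarrow> (\<exists>k. X ^\<^sub>m k = 0\<^sub>m (dim_row X) (dim_col X))"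

text \<open>A k[x,y]-module of finite length n supported at m=(x,y) is the k-vector space k^n
  together with the commuting nilpotent actions X (of x) and Y (of y).\<close>
definition kxy_module :: "nat \<Rightarrow> 'a::field mat \<Rightarrow> 'a mat \<Rightarrow> bool" where
  "kxy_module n X Y \<longleftrightarrow> X \<in> carrier_mat n n \<and> Y \<in> carrier_mat n n \<and> X * Y = Y * X
     \<and> nilpotent_mat X \<and> nilpotent_mat Y"

text \<open>r_M = dim_k M/mM, where mM = xM + yM is the column space of the block matrix [X | Y].\<close>
definition min_gens :: "nat \<Rightarrow> 'a::field mat \<Rightarrow> 'a mat \<Rightarrow> nat" where
  "min_gens n X Y = n - vec_space.rank n (four_block_mat X Y (0\<^sub>m 0 n) (0\<^sub>m 0 n))"

definition kxy_iso :: "nat \<Rightarrow> 'a::field mat \<Rightarrow> 'a mat \<Rightarrow> 'a mat \<Rightarrow> 'a mat \<Rightarrow> bool" where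
  "kxy_iso n X Y X' Y' \<longleftrightarrow> (\<exists>P Q. P \<in> carrier_mat n n \<and> Q \<in> carrier_mat n n \<and>
      P * Q = 1\<^sub>m n \<and> Q * P = 1\<^sub>m n \<and> X = P * X' * Q \<and> Y = P * Y' * Q)"

text \<open>Direct sum k^m \<oplus> N (x,y acting by zero on k^m = (A/m)^m), N given by 3x3 matrices.\<close>
definition triv_plus :: "nat \<Rightarrow> 'a::field mat \<Rightarrow> 'a mat" where
  "triv_plus m Z = four_block_mat (0\<^sub>m m m) (0\<^sub>m m (dim_col Z)) (0\<^sub>m (dim_row Z) m) Z"

end

theory Submission
  imports Defs "Jordan_Normal_Form.Matrix_Kernel"
begin

context vec_space begin
lemma lincomb_single: assumes "v \<in> carrier_vec n" shows "lincomb a {v} = a v \<cdot>\<^sub>v v"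
  unfolding lincomb_def by (rule M.add.finprod_singleton_set) (use assms in simp)

lemma lin_indpt_empty: "lin_indpt {}"
proof -
  have "lin_indpt (set (unit_vecs n))" using unit_vecs_basis unfolding basis_def by blast
  from subset_li_is_li[OF this] show ?thesis by blast
qed

lemma rank1_factor:
  assumes A: "A \<in> carrier_mat n m" and r: "rank A = 1"
  shows "\<exists>v c. v \<in> carrier_vec n \<and> v \<noteq> 0\<^sub>v n \<and> (\<forall>j<m. col A j = c j \<cdot>\<^sub>v v)"
proof -
  have "\<exists>j0<m. col A j0 \<noteq> 0\<^sub>v n"
  proof (rule ccontr)
    assume "\<not> ?thesis"
    hence "A = 0\<^sub>m n m" using A
      by (intro eq_matI) (auto, metis col_def index_vec index_zero_vec(1) carrier_matD)
    thus False using r rank_0I by simp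
  qed
  then obtain j0 where j0: "j0 < m" "col A j0 \<noteq> 0\<^sub>v n" by blast
  define v where "v = col A j0"
  have vc: "v \<in> carrier_vec n" using A j0 by (auto simp: v_def)
  have li1: "lin_indpt {v}"
  proof -
    have "v \<notin> span {}" using span_empty j0 by (simp add: v_def)
    thus ?thesis using lin_dep_iff_in_span[of "{}" v] vc lin_indpt_empty by simp
  qed
  have ex: "\<exists>t. col A j = t \<cdot>\<^sub>v v" if j: "j < m" for j
  proof -
    have cc: "col A j \<in> carrier_vec n" using A j by auto
    have "col A j \<in> span {v}"
    proof (rule ccontr)
      assume ns: "col A j \<notin> span {v}"
      have "v \<in> span {v}" using span_self[of v] vc by simp
      hence nv: "col A j \<notin> {v}" using ns by blast
      have "lin_indpt ({v} \<union> {col A j})"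
        using lin_dep_iff_in_span[of "{v}" "col A j"] ns nv li1 vc cc by auto
      moreover have "{v} \<union> {col A j} \<subseteq> set (cols A)"
        using j j0 A by (auto simp: v_def cols_def)
      ultimately have "card ({v} \<union> {col A j}) \<le> rank A"
        using rank_ge_card_indpt[OF A] by blast
      moreover have "card ({v} \<union> {col A j}) = 2" using nv by auto
      ultimately show False using r by simp
    qed
    from in_spanE[OF this] obtain a B where aB: "col A j = lincomb a B" "finite B" "B \<subseteq> {v}"
      by blast
    show ?thesis
    proof (cases "B = {}")
      case True
      hence "col A j = 0 \<cdot>\<^sub>v v" using aB vc lincomb_def by simp
      thus ?thesis by blast
    next
      case False
      hence "B = {v}" using aB(3) by blast
      hence "col A j = a v \<cdot>\<^sub>v v" using aB(1) lincomb_single[OF vc] by simp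
      thus ?thesis by blast
    qed
  qed
  have "\<forall>j. \<exists>t. j < m \<longrightarrow> col A j = t \<cdot>\<^sub>v v" using ex by blast
  from choice[OF this] obtain c where c: "\<forall>j. j < m \<longrightarrow> col A j = c j \<cdot>\<^sub>v v" by blast
  have "v \<noteq> 0\<^sub>v n" using j0 v_def by simp
  with vc c show ?thesis by blast
qed
end


lemma (in vectorspace) extend_li_basis:
  assumes fd: fin_dim and S: "S \<subseteq> carrier V" and li: "lin_indpt S"
  shows "\<exists>T. S \<subseteq> T \<and> finite T \<and> basis T"
proof -
  let ?P = "\<lambda>A. A \<subseteq> carrier V \<and> lin_indpt A \<and> S \<subseteq> A"
  have "\<exists>A. finite A \<and> maximal A ?P"
    by (rule maximal_exists[of ?P dim S]) (use li_le_dim[OF fd] S li in auto)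
  then obtain A where A: "finite A" "maximal A ?P" by blast
  have "maximal A (\<lambda>T. T \<subseteq> carrier V \<and> lin_indpt T)"
    using A(2) unfolding maximal_def by blast
  hence "basis A" by (rule max_li_is_basis)
  thus ?thesis using A unfolding maximal_def by blast
qed

lemma (in kernel) kernel_big:
  shows "\<exists>\<beta>. finite \<beta> \<and> basis \<beta> \<and> card \<beta> \<ge> nc - nr"
proof -
  note C = A
  obtain B where gj: "gauss_jordan_single A = B" by auto
  note g = gauss_jordan_single[OF C gj]
  from g(4) obtain P Q where PQ: "B = P * A" "P \<in> carrier_mat nr nr" "Q \<in> carrier_mat nr nr"
    "Q * P = 1\<^sub>m nr" by blast
  have keq: "mat_kernel B = mat_kernel A" unfolding PQ(1)
    by (rule mat_kernel_mult_eq[OF A PQ(2) PQ(3) PQ(4)])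
  note fb = find_base_vectors[OF g(3) g(2)]
  have "card { i. i < nr \<and> row B i \<noteq> 0\<^sub>v nc} \<le> nr"
    by (rule order_trans[OF card_mono[of "{..<nr}"]]) auto
  hence "card (set (find_base_vectors B)) \<ge> nc - nr" using fb(4) by linarith
  moreover have "basis (set (find_base_vectors B))"
    using fb(3) keq by simp
  ultimately show ?thesis by blast
qed


context vec_space begin
lemma li_single: assumes vc: "v \<in> carrier_vec n" and v0: "v \<noteq> 0\<^sub>v n" shows "lin_indpt {v}"
proof -
  have "v \<notin> span {}" using span_empty v0 by simp
  thus ?thesis using lin_dep_iff_in_span[of "{}" v] vc lin_indpt_empty by simp
qed
end

lemma det_inv:
  fixes A :: "'a::field mat"
  assumes A: "A \<in> carrier_mat n n" and d: "det A \<noteq> 0"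
  shows "\<exists>B. B \<in> carrier_mat n n \<and> A * B = 1\<^sub>m n \<and> B * A = 1\<^sub>m n"
proof -
  from det_non_zero_imp_unit[OF A d, unfolded Units_def, of "()"]
  show ?thesis by (auto simp: ring_mat_def)
qed

lemma (in vec_space) indpt_list_invertible:
  assumes l: "length L = n" and d: "distinct L" and c: "set L \<subseteq> carrier_vec n" and li: "lin_indpt (set L)"
  shows "\<exists>Q. Q \<in> carrier_mat n n \<and> mat_of_cols n L * Q = 1\<^sub>m n \<and> Q * mat_of_cols n L = 1\<^sub>m n"
proof -
  have Pc: "mat_of_cols n L \<in> carrier_mat n n" using mat_of_cols_carrier(1)[of n L] l by simp
  have cP: "cols (mat_of_cols n L) = L" using c by simp
  have "rank (mat_of_cols n L) = n" using lin_indpt_full_rank[OF Pc] cP d li by simp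
  hence "det (mat_of_cols n L) \<noteq> 0" using det_rank_iff[OF Pc] by simp
  from det_inv[OF Pc this] show ?thesis .
qed

lemma good_basis:
  fixes a b v :: "'a::field vec"
  assumes n3: "n \<ge> 3" and ac: "a \<in> carrier_vec n" and bc: "b \<in> carrier_vec n"
    and vc: "v \<in> carrier_vec n" and v0: "v \<noteq> 0\<^sub>v n" and av: "a \<bullet> v = 0" and bv: "b \<bullet> v = 0"
  shows "\<exists>P Q. P \<in> carrier_mat n n \<and> Q \<in> carrier_mat n n \<and> P * Q = 1\<^sub>m n \<and> Q * P = 1\<^sub>m n \<and>
     col P (n - 3) = v \<and> (\<forall>j<n-3. a \<bullet> col P j = 0 \<and> b \<bullet> col P j = 0)"
proof -
  define C where "C = mat_of_rows n [a, b]"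
  have Cc: "C \<in> carrier_mat 2 n" unfolding C_def
    using mat_of_rows_carrier(1)[of n "[a,b]"] by (simp add: numeral_2_eq_2)
  interpret K: kernel 2 n C by (unfold_locales, rule Cc)
  have r0: "row C 0 = a" unfolding C_def using mat_of_rows_row[of 0 "[a,b]" n] ac by simp
  have r1: "row C 1 = b" unfolding C_def using mat_of_rows_row[of 1 "[a,b]" n] bc by simp
  have Cv: "(C *\<^sub>v w) $ i = row C i \<bullet> w" if "i < 2" for i w
    using index_mult_mat_vec[of i C w] that Cc by simp
  have kerI: "w \<in> mat_kernel C" if "w \<in> carrier_vec n" "a \<bullet> w = 0" "b \<bullet> w = 0" for w
  proof (rule mat_kernelI[OF Cc that(1)])
    show "C *\<^sub>v w = 0\<^sub>v 2"
    proof (rule eq_vecI)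
      fix i assume "i < dim_vec (0\<^sub>v 2 :: 'a vec)"
      hence "i = 0 \<or> i = 1" by auto
      thus "(C *\<^sub>v w) $ i = 0\<^sub>v 2 $ i"
        using that Cv[of 0 w] Cv[of 1 w] r0 r1 by auto
    qed (use Cc in simp)
  qed
  have kerD: "a \<bullet> w = 0 \<and> b \<bullet> w = 0" if "w \<in> mat_kernel C" for w
  proof -
    have "C *\<^sub>v w = 0\<^sub>v 2" using mat_kernelD[OF Cc that] by simp
    hence "(C *\<^sub>v w) $ 0 = 0" "(C *\<^sub>v w) $ 1 = 0" by auto
    thus ?thesis using Cv[of 0 w] Cv[of 1 w] r0 r1 by simp
  qed
  obtain \<beta> where \<beta>: "finite \<beta>" "K.basis \<beta>" "card \<beta> \<ge> n - 2"
    using K.kernel_big by auto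
  have fdK: K.Ker.fin_dim
    using \<beta> unfolding K.Ker.fin_dim_def K.Ker.basis_def by blast
  have vK: "v \<in> mat_kernel C" using kerI[OF vc av bv] .
  have liv: "K.lin_indpt {v}"
    using K.NC.li_single[OF vc v0] K.lindep_same[of "{v}"] vK by simp
  obtain T where T: "{v} \<subseteq> T" "finite T" "K.basis T"
    using K.Ker.extend_li_basis[OF fdK _ liv] vK by auto
  have cT: "card T \<ge> n - 2"
    using K.Ker.dim_basis[OF T(2,3)] K.Ker.dim_basis[OF \<beta>(1,2)] \<beta>(3) by simp
  have "card (T - {v}) \<ge> n - 3" using cT T(1,2) by (simp add: card_Diff_singleton)
  then obtain B0 where B0: "B0 \<subseteq> T - {v}" "card B0 = n - 3" "finite B0"
    by (rule obtain_subset_with_card_n)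
  define S1 where "S1 = insert v B0"
  have TK: "T \<subseteq> mat_kernel C" using T(3) unfolding K.Ker.basis_def by blast
  have S1K: "S1 \<subseteq> mat_kernel C" using B0 T TK by (auto simp: S1_def)
  have "K.lin_indpt T" using T(3) unfolding K.Ker.basis_def by blast
  hence "K.lin_indpt S1" using K.Ker.subset_li_is_li[of T S1] B0 T(1) TK by (auto simp: S1_def)
  hence liS1: "K.NC.lin_indpt S1" using K.lindep_same[OF S1K] by simp
  have S1c: "S1 \<subseteq> carrier_vec n" using S1K mat_kernel_carrier[OF Cc] by blast
  obtain T1 where T1: "S1 \<subseteq> T1" "finite T1" "K.NC.basis T1"
    using K.NC.extend_li_basis[OF K.NC.fin_dim S1c liS1] by auto
  have cT1: "card T1 = n" using K.NC.dim_basis[OF T1(2,3)] K.NC.dim_is_n by simp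
  have vB0: "v \<notin> B0" using B0(1) by blast
  have cS1: "card S1 = n - 2" using B0(2,3) n3 vB0 by (simp add: S1_def)
  have "card (T1 - S1) = 2" using cT1 cS1 T1(1,2) n3 by (simp add: card_Diff_subset finite_subset)
  then obtain u1 u2 where u: "T1 - S1 = {u1, u2}" "u1 \<noteq> u2" by (auto simp: card_2_iff)
  obtain ks where ks: "set ks = B0" "distinct ks" using finite_distinct_list[OF B0(3)] by blast
  have lks: "length ks = n - 3" using distinct_card[OF ks(2)] ks(1) B0(2) by simp
  define L where "L = ks @ [v, u1, u2]"
  have uS1: "u1 \<notin> S1" "u2 \<notin> S1" using u(1) by blast+
  have dL: "distinct L" using ks vB0 uS1 u(2) by (auto simp: L_def S1_def)
  have sL: "set L = T1" using u(1) T1(1) ks(1) by (auto simp: L_def S1_def)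
  have lL: "length L = n" using lks n3 by (simp add: L_def)
  have T1c: "T1 \<subseteq> carrier_vec n" using T1(3) unfolding K.NC.basis_def by blast
  have liL: "K.NC.lin_indpt (set L)" using T1(3) sL unfolding K.NC.basis_def by blast
  define P where "P = mat_of_cols n L"
  have Pc: "P \<in> carrier_mat n n" using mat_of_cols_carrier(1)[of n L] lL by (simp add: P_def)
  have colP: "col P j = L ! j" if "j < n" for j
    using col_mat_of_cols[of j L n] that lL sL T1c nth_mem[of j L] unfolding P_def by auto
  obtain Q where Q: "Q \<in> carrier_mat n n" "P * Q = 1\<^sub>m n" "Q * P = 1\<^sub>m n"
    using K.NC.indpt_list_invertible[OF lL dL _ liL] sL T1c unfolding P_def by auto
  have "col P (n - 3) = v" using colP[of "n-3"] n3 lks by (simp add: L_def nth_append)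
  moreover have "a \<bullet> col P j = 0 \<and> b \<bullet> col P j = 0" if j: "j < n - 3" for j
  proof -
    have "col P j = ks ! j" using colP[of j] j lks by (simp add: L_def nth_append)
    moreover have "ks ! j \<in> mat_kernel C" using j lks ks(1) B0(1) TK nth_mem[of j ks] by auto
    ultimately show ?thesis using kerD by simp
  qed
  ultimately show ?thesis using Pc Q by blast
qed



lemma outer_mult:
  fixes X :: "'a::field mat"
  assumes X: "X \<in> carrier_mat n n" and e: "\<And>i j. i < n \<Longrightarrow> j < n \<Longrightarrow> X $$ (i,j) = v $ i * a $ j"
    and vc: "v \<in> carrier_vec n" and ac: "a \<in> carrier_vec n" and wc: "w \<in> carrier_vec n"
  shows "X *\<^sub>v w = (a \<bullet> w) \<cdot>\<^sub>v v"
proof (rule eq_vecI)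
  show "dim_vec (X *\<^sub>v w) = dim_vec ((a \<bullet> w) \<cdot>\<^sub>v v)" using X vc by simp
  fix i assume "i < dim_vec ((a \<bullet> w) \<cdot>\<^sub>v v)"
  hence i: "i < n" using vc by simp
  have "(X *\<^sub>v w) $ i = row X i \<bullet> w" using X i by simp
  also have "\<dots> = (\<Sum>j\<in>{0..<n}. X $$ (i,j) * w $ j)"
    unfolding scalar_prod_def using X wc i by simp
  also have "\<dots> = (\<Sum>j\<in>{0..<n}. v $ i * (a $ j * w $ j))"
    by (rule sum.cong) (auto simp: e i)
  also have "\<dots> = v $ i * (a \<bullet> w)"
    unfolding scalar_prod_def sum_distrib_left using wc by simp
  also have "\<dots> = ((a \<bullet> w) \<cdot>\<^sub>v v) $ i" using i vc by simp
  finally show "(X *\<^sub>v w) $ i = ((a \<bullet> w) \<cdot>\<^sub>v v) $ i" .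
qed

lemma nil_orth:
  fixes X :: "'a::field mat"
  assumes X: "X \<in> carrier_mat n n" and nil: "nilpotent_mat X"
    and vc: "v \<in> carrier_vec n" and v0: "v \<noteq> 0\<^sub>v n"
    and m: "\<And>w. w \<in> carrier_vec n \<Longrightarrow> X *\<^sub>v w = (a \<bullet> w) \<cdot>\<^sub>v v"
  shows "a \<bullet> v = 0"
proof -
  have pk: "(X ^\<^sub>m k) *\<^sub>v v = (a \<bullet> v) ^ k \<cdot>\<^sub>v v" for k
  proof (induction k)
    case 0
    have "X ^\<^sub>m 0 = 1\<^sub>m n" using X by simp
    hence "(X ^\<^sub>m 0) *\<^sub>v v = v" using one_mult_mat_vec[OF vc] by simp
    thus ?case using one_smult_vec[of v] by simp
  next
    case (Suc k)
    have Xk: "X ^\<^sub>m k \<in> carrier_mat n n" using X pow_mat_dim_square[OF X] by (intro carrier_matI) auto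
    have "(X ^\<^sub>m Suc k) *\<^sub>v v = (X ^\<^sub>m k) *\<^sub>v (X *\<^sub>v v)"
      unfolding pow_mat.simps by (rule assoc_mult_mat_vec[OF Xk X vc])
    also have "\<dots> = (X ^\<^sub>m k) *\<^sub>v ((a \<bullet> v) \<cdot>\<^sub>v v)" by (subst m[OF vc]) (rule refl)
    also have "\<dots> = (a \<bullet> v) \<cdot>\<^sub>v ((X ^\<^sub>m k) *\<^sub>v v)" by (rule mult_mat_vec[OF Xk vc])
    also have "\<dots> = (a \<bullet> v) ^ Suc k \<cdot>\<^sub>v v" unfolding Suc smult_smult_assoc by simp
    finally show ?case .
  qed
  from nil obtain k where k: "X ^\<^sub>m k = 0\<^sub>m n n" using X unfolding nilpotent_mat_def by auto
  have z: "0\<^sub>m n n *\<^sub>v v = 0\<^sub>v n"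
  proof (rule eq_vecI)
    fix i assume "i < dim_vec (0\<^sub>v n :: 'a vec)"
    hence i: "i < n" by simp
    have "(0\<^sub>m n n *\<^sub>v v) $ i = row (0\<^sub>m n n) i \<bullet> v" using i by simp
    also have "\<dots> = 0\<^sub>v n \<bullet> v" using i by (simp add: row_zero)
    also have "\<dots> = 0" using vc by simp
    finally show "(0\<^sub>m n n *\<^sub>v v) $ i = 0\<^sub>v n $ i" using i by simp
  qed simp
  have "(a \<bullet> v) ^ k \<cdot>\<^sub>v v = 0\<^sub>v n" using pk[of k] unfolding k z by simp
  moreover have "\<exists>i<n. v $ i \<noteq> 0"
  proof (rule ccontr)
    assume "\<not> ?thesis"
    hence "v = 0\<^sub>v n" using vc by (intro eq_vecI) auto
    thus False using v0 by simp
  qed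
  then obtain i where i: "i < n" "v $ i \<noteq> 0" by blast
  ultimately have "((a \<bullet> v) ^ k \<cdot>\<^sub>v v) $ i = 0" by simp
  hence "(a \<bullet> v) ^ k * v $ i = 0" using i vc by simp
  thus ?thesis using i by simp
qed

lemma prod_zero3:
  fixes U W :: "'a::field mat"
  assumes U: "U \<in> carrier_mat 3 3" and W: "W \<in> carrier_mat 3 3"
    and u: "\<And>i. i < 3 \<Longrightarrow> U $$ (i,0) = 0" and w: "\<And>k j. k < 3 \<Longrightarrow> j < 3 \<Longrightarrow> k \<noteq> 0 \<Longrightarrow> W $$ (k,j) = 0"
  shows "U * W = 0\<^sub>m 3 3"
proof (rule eq_matI)
  fix i j assume i: "i < dim_row (0\<^sub>m 3 3 :: 'a mat)" and j: "j < dim_col (0\<^sub>m 3 3 :: 'a mat)"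
  have "(U * W) $$ (i,j) = row U i \<bullet> col W j" using U W i j by simp
  also have "\<dots> = (\<Sum>k\<in>{0..<3}. U $$ (i,k) * W $$ (k,j))"
    unfolding scalar_prod_def using U W i j by simp
  also have "\<dots> = 0"
  proof (rule sum.neutral, intro ballI)
    fix k :: nat assume k: "k \<in> {0..<3}"
    show "U $$ (i,k) * W $$ (k,j) = 0"
    proof (cases "k = 0")
      case True thus ?thesis using u i by simp
    next
      case False thus ?thesis using w[of k j] k j by simp
    qed
  qed
  finally show "(U * W) $$ (i,j) = 0\<^sub>m 3 3 $$ (i,j)" using i j by simp
qed (use U W in auto)

lemma (in vec_space) rank_ge1:
  assumes M: "M \<in> carrier_mat n nc" and j: "j < nc" and c: "col M j \<noteq> 0\<^sub>v n"
  shows "1 \<le> rank M"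
proof -
  have li: "lin_indpt {}"
  proof -
    have "lin_indpt (set (unit_vecs n))" using unit_vecs_basis unfolding basis_def by blast
    from subset_li_is_li[OF this] show ?thesis by blast
  qed
  have cc: "col M j \<in> carrier_vec n" using M j by auto
  have "col M j \<notin> span {}" using span_empty c by simp
  hence "lin_indpt {col M j}" using lin_dep_iff_in_span[of "{}" "col M j"] cc li by simp
  moreover have "{col M j} \<subseteq> set (cols M)" using M j by (auto simp: cols_def)
  ultimately have "card {col M j} \<le> rank M" using rank_ge_card_indpt[OF M] by blast
  thus ?thesis by simp
qed


lemma conj_form:
  fixes X P Q :: "'a::field mat"
  assumes X: "X \<in> carrier_mat n n" and P: "P \<in> carrier_mat n n" and Q: "Q \<in> carrier_mat n n"
    and QP: "Q * P = 1\<^sub>m n" and n: "n = m + 3"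
    and Xm: "\<And>w. w \<in> carrier_vec n \<Longrightarrow> X *\<^sub>v w = (a \<bullet> w) \<cdot>\<^sub>v v"
    and colv: "col P m = v" and a0: "\<And>j. j < m \<Longrightarrow> a \<bullet> col P j = 0" and av: "a \<bullet> v = 0"
    and vc: "v \<in> carrier_vec n"
  shows "Q * X * P = triv_plus m (mat 3 3 (\<lambda>(i,j). if i = 0 then a \<bullet> col P (m+j) else 0))"
    (is "_ = triv_plus m ?Z")
proof (rule eq_matI)
  have Zc: "?Z \<in> carrier_mat 3 3" by simp
  have dT: "dim_row (triv_plus m ?Z) = n" "dim_col (triv_plus m ?Z) = n"
    unfolding triv_plus_def using n by simp_all
  show "dim_row (Q * X * P) = dim_row (triv_plus m ?Z)" using Q dT by simp
  show "dim_col (Q * X * P) = dim_col (triv_plus m ?Z)" using P dT by simp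
  fix i j assume i': "i < dim_row (triv_plus m ?Z)" and j': "j < dim_col (triv_plus m ?Z)"
  hence i: "i < n" and j: "j < n" using dT by auto
  have mn: "m < n" using n by simp
  have Qv: "Q *\<^sub>v v = unit_vec n m"
  proof -
    have "col (Q * P) m = Q *\<^sub>v col P m" by (rule col_mult2[OF Q P mn])
    thus ?thesis using QP colv mn by simp
  qed
  have cPj: "col P j \<in> carrier_vec n" using P j by simp
  have XP: "X * P \<in> carrier_mat n n" using X P by simp
  have "Q * X * P = Q * (X * P)" by (rule assoc_mult_mat[OF Q X P])
  moreover have "(Q * (X * P)) $$ (i,j) = row Q i \<bullet> col (X * P) j"
    by (rule index_mult_mat(1)) (use Q XP i j in auto)
  ultimately have "(Q * X * P) $$ (i,j) = row Q i \<bullet> col (X * P) j" by simp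
  also have "col (X * P) j = (a \<bullet> col P j) \<cdot>\<^sub>v v"
    using col_mult2[OF X P j] Xm[OF cPj] by simp
  also have "row Q i \<bullet> ((a \<bullet> col P j) \<cdot>\<^sub>v v) = (a \<bullet> col P j) * (row Q i \<bullet> v)"
    using Q vc i by simp
  also have "row Q i \<bullet> v = (Q *\<^sub>v v) $ i" using Q i by simp
  also have "\<dots> = (if i = m then 1 else 0)" unfolding Qv using i mn by simp
  finally have L: "(Q * X * P) $$ (i,j) = (a \<bullet> col P j) * (if i = m then 1 else 0)" .
  have R: "triv_plus m ?Z $$ (i,j) = (if i < m then 0 else if j < m then 0 else ?Z $$ (i - m, j - m))"
    unfolding triv_plus_def using i j n by (subst index_mat_four_block(1)) auto
  show "(Q * X * P) $$ (i,j) = triv_plus m ?Z $$ (i,j)"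
  proof (cases "i < m")
    case True thus ?thesis unfolding L R by simp
  next
    case False
    note iF = False
    show ?thesis
    proof (cases "j < m")
      case True thus ?thesis unfolding L R using a0[OF True] by simp
    next
      case False
      have "i - m < 3" "j - m < 3" using i j n by auto
      thus ?thesis unfolding L R using iF False by auto
    qed
  qed
qed

theorem proposition2p3:
  fixes X Y :: "'a::field_char_0 mat" and n :: nat
  assumes "alg_closed TYPE('a)"
    and "kxy_module n X Y"
    and "n \<ge> 3"
    and "min_gens n X Y = n - 1"
  shows "\<exists>XN YN. kxy_module 3 XN YN \<and> min_gens 3 XN YN = 2 \<and>
           kxy_iso n X Y (triv_plus (n - 3) XN) (triv_plus (n - 3) YN)"
proof -
  note n3 = assms(3)
  have X: "X \<in> carrier_mat n n" and Y: "Y \<in> carrier_mat n n" and nX: "nilpotent_mat X"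
    and nY: "nilpotent_mat Y" using assms(2) unfolding kxy_module_def by auto
  define A where "A = four_block_mat X Y (0\<^sub>m 0 n) (0\<^sub>m 0 n)"
  have Ac: "A \<in> carrier_mat n (n + n)"
    using four_block_carrier_mat[OF X zero_carrier_mat[of 0 n]]
    unfolding A_def by simp
  interpret V: vec_space "TYPE('a)" n .
  have "n - V.rank A = n - 1" using assms(4) unfolding min_gens_def A_def by simp
  hence r: "V.rank A = 1" using n3 by linarith
  obtain v c where vc: "v \<in> carrier_vec n" and v0: "v \<noteq> 0\<^sub>v n"
    and cA: "\<forall>j<n+n. col A j = c j \<cdot>\<^sub>v v"
    using V.rank1_factor[OF Ac r] by blast
  define a where "a = vec n c"
  define b where "b = vec n (\<lambda>j. c (n + j))"
  have ac: "a \<in> carrier_vec n" and bc: "b \<in> carrier_vec n" unfolding a_def b_def by auto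
  have Aij: "A $$ (i,j) = c j * v $ i" if "i < n" "j < n + n" for i j
  proof -
    have "A $$ (i,j) = col A j $ i" using Ac that by simp
    also have "\<dots> = c j * v $ i" using cA that vc by simp
    finally show ?thesis .
  qed
  have Xe: "X $$ (i,j) = v $ i * a $ j" if "i < n" "j < n" for i j
  proof -
    have "A $$ (i,j) = X $$ (i,j)" unfolding A_def using X Y that by simp
    thus ?thesis using Aij[of i j] that by (simp add: a_def mult.commute)
  qed
  have Ye: "Y $$ (i,j) = v $ i * b $ j" if "i < n" "j < n" for i j
  proof -
    have "A $$ (i,n+j) = Y $$ (i,j)" unfolding A_def using X Y that by simp
    thus ?thesis using Aij[of i "n+j"] that by (simp add: b_def mult.commute)
  qed
  have Xm: "X *\<^sub>v w = (a \<bullet> w) \<cdot>\<^sub>v v" if "w \<in> carrier_vec n" for w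
    by (rule outer_mult[OF X Xe vc ac that])
  have Ym: "Y *\<^sub>v w = (b \<bullet> w) \<cdot>\<^sub>v v" if "w \<in> carrier_vec n" for w
    by (rule outer_mult[OF Y Ye vc bc that])
  have av: "a \<bullet> v = 0" by (rule nil_orth[OF X nX vc v0 Xm])
  have bv: "b \<bullet> v = 0" by (rule nil_orth[OF Y nY vc v0 Ym])
  obtain P Q where P: "P \<in> carrier_mat n n" and Q: "Q \<in> carrier_mat n n"
    and PQ: "P * Q = 1\<^sub>m n" and QP: "Q * P = 1\<^sub>m n" and colv: "col P (n - 3) = v"
    and ab0: "\<forall>j<n-3. a \<bullet> col P j = 0 \<and> b \<bullet> col P j = 0"
    using good_basis[OF n3 ac bc vc v0 av bv] by blast
  define m where "m = n - 3"
  have nm: "n = m + 3" using n3 unfolding m_def by simp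
  define XN where "XN = mat 3 3 (\<lambda>(i,j). if i = 0 then a \<bullet> col P (m+j) else (0::'a))"
  define YN where "YN = mat 3 3 (\<lambda>(i,j). if i = 0 then b \<bullet> col P (m+j) else (0::'a))"
  have QXP: "Q * X * P = triv_plus m XN" unfolding XN_def
    by (rule conj_form[OF X P Q QP nm Xm]) (use colv ab0 av vc in \<open>auto simp: m_def\<close>)
  have QYP: "Q * Y * P = triv_plus m YN" unfolding YN_def
    by (rule conj_form[OF Y P Q QP nm Ym]) (use colv ab0 bv vc in \<open>auto simp: m_def\<close>)
  have bck: "P * (Q * Z * P) * Q = Z" if Z: "Z \<in> carrier_mat n n" for Z
  proof -
    have "P * (Q * Z * P) * Q = P * (Q * Z) * P * Q"
      using assoc_mult_mat[OF P mult_carrier_mat[OF Q Z] P] by simp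
    also have "P * (Q * Z) = (P * Q) * Z" using assoc_mult_mat[OF P Q Z] by simp
    also have "\<dots> = Z" using PQ Z by simp
    also have "Z * P * Q = Z * (P * Q)" using assoc_mult_mat[OF Z P Q] by simp
    also have "\<dots> = Z" using PQ Z by simp
    finally show ?thesis .
  qed
  have isoX: "X = P * triv_plus m XN * Q" using bck[OF X] QXP by simp
  have isoY: "Y = P * triv_plus m YN * Q" using bck[OF Y] QYP by simp
  have XNc: "XN \<in> carrier_mat 3 3" and YNc: "YN \<in> carrier_mat 3 3" unfolding XN_def YN_def by auto
  have XN0: "XN $$ (i,0) = 0" if "i < 3" for i using that colv av unfolding XN_def m_def by auto
  have YN0: "YN $$ (i,0) = 0" if "i < 3" for i using that colv bv unfolding YN_def m_def by auto
  have XNk: "XN $$ (k,j) = 0" if "k < 3" "j < 3" "k \<noteq> 0" for k j using that unfolding XN_def by auto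
  have YNk: "YN $$ (k,j) = 0" if "k < 3" "j < 3" "k \<noteq> 0" for k j using that unfolding YN_def by auto
  have XY0: "XN * YN = 0\<^sub>m 3 3" by (rule prod_zero3[OF XNc YNc XN0 YNk])
  have YX0: "YN * XN = 0\<^sub>m 3 3" by (rule prod_zero3[OF YNc XNc YN0 XNk])
  have XX0: "XN * XN = 0\<^sub>m 3 3" by (rule prod_zero3[OF XNc XNc XN0 XNk])
  have YY0: "YN * YN = 0\<^sub>m 3 3" by (rule prod_zero3[OF YNc YNc YN0 YNk])
  have nilXN: "nilpotent_mat XN"
  proof -
    have "XN ^\<^sub>m 2 = (1\<^sub>m 3 * XN) * XN" using XNc by (simp add: numeral_2_eq_2)
    also have "\<dots> = 0\<^sub>m 3 3" using XX0 XNc by simp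
    finally show ?thesis unfolding nilpotent_mat_def using XNc by auto
  qed
  have nilYN: "nilpotent_mat YN"
  proof -
    have "YN ^\<^sub>m 2 = (1\<^sub>m 3 * YN) * YN" using YNc by (simp add: numeral_2_eq_2)
    also have "\<dots> = 0\<^sub>m 3 3" using YY0 YNc by simp
    finally show ?thesis unfolding nilpotent_mat_def using YNc by auto
  qed
  have kN: "kxy_module 3 XN YN" unfolding kxy_module_def using XNc YNc XY0 YX0 nilXN nilYN by simp
  define A3 where "A3 = four_block_mat XN YN (0\<^sub>m 0 3) (0\<^sub>m 0 3)"
  have A3c: "A3 \<in> carrier_mat 3 6"
    using four_block_carrier_mat[OF XNc zero_carrier_mat[of 0 3]]
    unfolding A3_def by simp
  interpret V3: vec_space "TYPE('a)" 3 .
  have A3e: "A3 $$ (i,j) = (if j < 3 then XN $$ (i,j) else YN $$ (i, j - 3))" if "i < 3" "j < 6" for i j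
    unfolding A3_def using that XNc YNc by simp
  have le1: "V3.rank A3 \<le> 1"
  proof (rule V3.rank_le_1_product_entries[OF A3c, of "\<lambda>r. if r = 0 then 1 else 0" "\<lambda>c. A3 $$ (0,c)"])
    fix r c assume r: "r < dim_row A3" and c: "c < dim_col A3"
    hence r3: "r < 3" and c6: "c < 6" using A3c by auto
    show "A3 $$ (r,c) = (if r = 0 then 1 else 0) * A3 $$ (0,c)"
    proof (cases "r = 0")
      case False
      thus ?thesis using A3e[OF r3 c6] XNk[of r c] YNk[of r "c - 3"] r3 c6 by auto
    qed simp
  qed
  have "\<exists>j<n. a \<bullet> col P j \<noteq> 0 \<or> b \<bullet> col P j \<noteq> 0"
  proof (rule ccontr)
    assume "\<not> ?thesis"
    hence z: "\<And>j. j < n \<Longrightarrow> a \<bullet> col P j = 0 \<and> b \<bullet> col P j = 0" by blast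
    have zero: "Z = 0\<^sub>m n n" if Z: "Z \<in> carrier_mat n n" and Zm: "\<And>j. j < n \<Longrightarrow> Z *\<^sub>v col P j = 0\<^sub>v n" for Z
    proof -
      have ZP: "Z * P = 0\<^sub>m n n"
      proof (rule eq_matI)
        fix i j assume i: "i < dim_row (0\<^sub>m n n :: 'a mat)" and j: "j < dim_col (0\<^sub>m n n :: 'a mat)"
        have "col (Z * P) j = Z *\<^sub>v col P j" using col_mult2[OF Z P] j by simp
        also have "\<dots> = 0\<^sub>v n" using Zm j by simp
        finally have "col (Z * P) j $ i = 0" using i by simp
        thus "(Z * P) $$ (i,j) = 0\<^sub>m n n $$ (i,j)" using i j Z P by simp
      qed (use Z P in auto)
      have "Z = Z * (P * Q)" using PQ Z by simp
      also have "\<dots> = (Z * P) * Q" using assoc_mult_mat[OF Z P Q] by simp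
      also have "\<dots> = 0\<^sub>m n n" using ZP Q by simp
      finally show ?thesis .
    qed
    have "X = 0\<^sub>m n n" using zero[OF X] Xm z P vc by simp
    moreover have "Y = 0\<^sub>m n n" using zero[OF Y] Ym z P vc by simp
    ultimately have "A = 0\<^sub>m n (n + n)"
      unfolding A_def by (intro eq_matI) auto
    thus False using r V.rank_0I by simp
  qed
  then obtain j where j: "j < n" "a \<bullet> col P j \<noteq> 0 \<or> b \<bullet> col P j \<noteq> 0" by blast
  have jm: "m \<le> j" using j ab0 unfolding m_def by (meson not_le)
  define k where "k = j - m"
  have k3: "k < 3" and jk: "j = m + k" using j jm nm unfolding k_def by auto
  have ge1: "1 \<le> V3.rank A3"
  proof (cases "a \<bullet> col P j \<noteq> 0")
    case True
    have "A3 $$ (0,k) \<noteq> 0" using A3e[of 0 k] k3 True jk unfolding XN_def by simp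
    moreover have "col A3 k $ 0 = A3 $$ (0,k)" using A3c k3 by simp
    ultimately have "col A3 k \<noteq> 0\<^sub>v 3" by auto
    thus ?thesis using V3.rank_ge1[OF A3c, of k] k3 by simp
  next
    case False
    hence bj: "b \<bullet> col P j \<noteq> 0" using j by simp
    have "A3 $$ (0,k+3) \<noteq> 0" using A3e[of 0 "k+3"] k3 bj jk unfolding YN_def by simp
    moreover have "col A3 (k+3) $ 0 = A3 $$ (0,k+3)" using A3c k3 by simp
    ultimately have "col A3 (k+3) \<noteq> 0\<^sub>v 3" by auto
    thus ?thesis using V3.rank_ge1[OF A3c, of "k+3"] k3 by simp
  qed
  have "min_gens 3 XN YN = 2" unfolding min_gens_def A3_def[symmetric] using le1 ge1 by simp
  moreover have "kxy_iso n X Y (triv_plus (n - 3) XN) (triv_plus (n - 3) YN)"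
    unfolding kxy_iso_def m_def[symmetric] using P Q PQ QP isoX isoY by blast
  ultimately show ?thesis using kN by blast
qed

end
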